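(* For any positive integers $f,l$ and any choice of integers $(M_C)_C$ for which the hypercube Hamiltonian $H=\sum_C\bigl(\sum_{i\in C}S_i-M_C\bigr)^2$ has at least one zero energy assignment, any two distinct zero energy assignments differ in at least $2^f$ variables; consequently every global minimum of $H$ is a $(2^f-1)$-minimum.
   Context: Fix positive integers $f,l$ and let $N=l^f$. The variables $S_i\in\{-1,+1\}$ are indexed by vectors $i=(x_1,\dots,x_f)$ with $x_a\in\{1,\dots,l\}$. A column $C$ is specified by an index $b\in\{1,\dots,f\}$ and integers $y_a\in\{1,\dots,l\}$ for all $a\neq b$; a variable $(x_1,\dots,x_f)$ lies in $C$ iff $x_a=y_a$ for all $a\neq b$. Given an integer $M_C$ for each column, $H(S)=\sum_C\bigl(\sum_{i\in C}S_i-M_C\bigr)^2$. A zero energy assignment is an $S$ with $\sum_{i\in C}S_i=M_C$ for every column $C$. A global minimum is an assignment minimizing $H$. For an integer $k\geq1$, an assignment $A$ is a $k$-minimum of $H$ if every assignment differing from $A$ in at least one and at most $k$ variables has a strictly larger value of $H$ than $A$. *)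

theory Defs
  imports "HOL-Library.FuncSet"
begin

text \<open>Variables are indexed by vectors (x_0,...,x_{f-1}) with entries in {1..l},
  represented as extensional functions on {0..<f}.\<close>
definition vars :: "nat \<Rightarrow> nat \<Rightarrow> (nat \<Rightarrow> nat) set" where
  "vars f l = PiE {0..<f} (\<lambda>_. {1..l})"

text \<open>A column is a pair (b, y): direction b < f and fixed coordinates y on all a \<noteq> b.\<close>
definition columns :: "nat \<Rightarrow> nat \<Rightarrow> (nat \<times> (nat \<Rightarrow> nat)) set" where
  "columns f l = {(b, y). b < f \<and> y \<in> PiE ({0..<f} - {b}) (\<lambda>_. {1..l})}"

definition column_vars :: "nat \<Rightarrow> nat \<Rightarrow> nat \<times> (nat \<Rightarrow> nat) \<Rightarrow> (nat \<Rightarrow> nat) set" where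
  "column_vars f l C = {x \<in> vars f l. \<forall>a \<in> {0..<f} - {fst C}. x a = snd C a}"

definition assignments :: "nat \<Rightarrow> nat \<Rightarrow> ((nat \<Rightarrow> nat) \<Rightarrow> int) set" where
  "assignments f l = PiE (vars f l) (\<lambda>_. {-1, 1})"

definition H :: "nat \<Rightarrow> nat \<Rightarrow> (nat \<times> (nat \<Rightarrow> nat) \<Rightarrow> int) \<Rightarrow> ((nat \<Rightarrow> nat) \<Rightarrow> int) \<Rightarrow> int" where
  "H f l M S = (\<Sum>C\<in>columns f l. ((\<Sum>i\<in>column_vars f l C. S i) - M C)^2)"

definition zero_energy where
  "zero_energy f l M S \<longleftrightarrow> S \<in> assignments f l \<and>
     (\<forall>C\<in>columns f l. (\<Sum>i\<in>column_vars f l C. S i) = M C)"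

definition global_min where
  "global_min f l M S \<longleftrightarrow> S \<in> assignments f l \<and> (\<forall>T\<in>assignments f l. H f l M S \<le> H f l M T)"

definition hamming :: "nat \<Rightarrow> nat \<Rightarrow> ((nat \<Rightarrow> nat) \<Rightarrow> int) \<Rightarrow> ((nat \<Rightarrow> nat) \<Rightarrow> int) \<Rightarrow> nat" where
  "hamming f l S T = card {i \<in> vars f l. S i \<noteq> T i}"

definition k_min where
  "k_min f l M k A \<longleftrightarrow> A \<in> assignments f l \<and>
     (\<forall>T\<in>assignments f l. 1 \<le> hamming f l A T \<and> hamming f l A T \<le> k \<longrightarrow> H f l M A < H f l M T)"

end

theory Submission
  imports Defs
begin

lemma finite_vars: "finite (vars f l)"
  unfolding vars_def by (intro finite_PiE) auto

lemma finite_columns: "finite (columns f l)"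
proof -
  have "columns f l \<subseteq> Sigma {0..<f} (\<lambda>b. PiE ({0..<f} - {b}) (\<lambda>_. {1..l}))"
    unfolding columns_def by (simp add: subset_iff)
  moreover have "finite (Sigma {0..<f} (\<lambda>b. PiE ({0..<f} - {b}) (\<lambda>_. {1..l})))"
    by (intro finite_SigmaI finite_PiE) auto
  ultimately show ?thesis by (rule finite_subset)
qed

definition Q :: "nat \<Rightarrow> nat \<Rightarrow> nat set \<Rightarrow> (nat \<Rightarrow> nat) \<Rightarrow> (nat \<Rightarrow> nat) set" where
  "Q f l A z = {x \<in> vars f l. \<forall>a\<in>{0..<f} - A. x a = z a}"

lemma support_bound:
  fixes D :: "(nat \<Rightarrow> nat) \<Rightarrow> int"
  assumes "finite A" "A \<subseteq> {0..<f}"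
    and col: "\<forall>x\<in>vars f l. \<forall>b\<in>A. sum D {y\<in>vars f l. \<forall>a\<in>{0..<f}-{b}. y a = x a} = 0"
    and "x0 \<in> Q f l A z" "D x0 \<noteq> 0"
  shows "card {x\<in>Q f l A z. D x \<noteq> 0} \<ge> 2 ^ card A"
  using assms
proof (induction A arbitrary: z x0 rule: finite_induct)
  case empty
  have "finite {x\<in>Q f l {} z. D x \<noteq> 0}" using finite_vars unfolding Q_def by auto
  moreover have "x0 \<in> {x\<in>Q f l {} z. D x \<noteq> 0}" using empty by auto
  ultimately show ?case by (simp add: Suc_le_eq card_gt_0_iff) blast
next
  case (insert b A)
  have x0v: "x0 \<in> vars f l" using insert.prems(3) unfolding Q_def by auto
  let ?L = "{y\<in>vars f l. \<forall>a\<in>{0..<f}-{b}. y a = x0 a}"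
  have s0: "sum D ?L = 0" using insert.prems(2) x0v by blast
  have x0L: "x0 \<in> ?L" using x0v by auto
  have finL: "finite ?L" using finite_vars by auto
  have "\<exists>x1\<in>?L. x1 \<noteq> x0 \<and> D x1 \<noteq> 0"
  proof (rule ccontr)
    assume "\<not> ?thesis"
    hence "\<forall>y\<in>?L - {x0}. D y = 0" by auto
    hence "sum D (?L - {x0}) = 0" by simp
    moreover have "sum D ?L = D x0 + sum D (?L - {x0})"
      using finL x0L by (simp add: sum.remove)
    ultimately show False using s0 insert.prems(4) by simp
  qed
  then obtain x1 where x1L: "x1 \<in> ?L" and "x1 \<noteq> x0" and Dx1: "D x1 \<noteq> 0" by blast
  have x1v: "x1 \<in> vars f l" using x1L by auto
  have bf: "b < f" using insert.prems(1) by auto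
  have diffb: "x1 b \<noteq> x0 b"
  proof
    assume e: "x1 b = x0 b"
    have "\<forall>a. x1 a = x0 a"
    proof
      fix a show "x1 a = x0 a"
      proof (cases "a < f")
        case True thus ?thesis using x1L e by (cases "a = b") auto
      next
        case False thus ?thesis using x0v x1v unfolding vars_def
          by (simp add: PiE_def extensional_def)
      qed
    qed
    thus False using \<open>x1 \<noteq> x0\<close> by auto
  qed
  have colA: "\<forall>x\<in>vars f l. \<forall>b\<in>A. sum D {y\<in>vars f l. \<forall>a\<in>{0..<f}-{b}. y a = x a} = 0"
    using insert.prems(2) by blast
  have IH0: "card {x\<in>Q f l A x0. D x \<noteq> 0} \<ge> 2 ^ card A"
    by (rule insert.IH[OF _ colA]) (use insert.prems(1,3,4) x0v in \<open>auto simp: Q_def\<close>)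
  have IH1: "card {x\<in>Q f l A x1. D x \<noteq> 0} \<ge> 2 ^ card A"
    by (rule insert.IH[OF _ colA]) (use insert.prems(1) x1v Dx1 in \<open>auto simp: Q_def\<close>)
  have disj: "{x\<in>Q f l A x0. D x \<noteq> 0} \<inter> {x\<in>Q f l A x1. D x \<noteq> 0} = {}"
    using diffb bf insert.hyps unfolding Q_def by auto
  have z0: "\<forall>a\<in>{0..<f} - insert b A. x0 a = z a" using insert.prems(3) unfolding Q_def by auto
  have sub: "{x\<in>Q f l A x0. D x \<noteq> 0} \<union> {x\<in>Q f l A x1. D x \<noteq> 0} \<subseteq> {x\<in>Q f l (insert b A) z. D x \<noteq> 0}"
  proof
    fix x assume xin: "x \<in> {x\<in>Q f l A x0. D x \<noteq> 0} \<union> {x\<in>Q f l A x1. D x \<noteq> 0}"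
    have "\<forall>a\<in>{0..<f} - insert b A. x a = z a"
    proof
      fix a assume a: "a \<in> {0..<f} - insert b A"
      have "x1 a = x0 a" using x1L a by auto
      thus "x a = z a" using xin a z0 unfolding Q_def by auto
    qed
    thus "x \<in> {x\<in>Q f l (insert b A) z. D x \<noteq> 0}" using xin unfolding Q_def by auto
  qed
  have fin: "finite {x\<in>Q f l (insert b A) z. D x \<noteq> 0}" using finite_vars unfolding Q_def by auto
  have "2 ^ card (insert b A) = 2 ^ card A + (2::nat) ^ card A" using insert.hyps by simp
  also have "\<dots> \<le> card {x\<in>Q f l A x0. D x \<noteq> 0} + card {x\<in>Q f l A x1. D x \<noteq> 0}"
    using IH0 IH1 by simp
  also have "\<dots> = card ({x\<in>Q f l A x0. D x \<noteq> 0} \<union> {x\<in>Q f l A x1. D x \<noteq> 0})"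
  proof -
    have f1: "finite {x\<in>Q f l A x0. D x \<noteq> 0}" using finite_vars unfolding Q_def by auto
    have f2: "finite {x\<in>Q f l A x1. D x \<noteq> 0}" using finite_vars unfolding Q_def by auto
    show ?thesis by (rule card_Un_disjoint[symmetric, OF f1 f2 disj])
  qed
  also have "\<dots> \<le> card {x\<in>Q f l (insert b A) z. D x \<noteq> 0}"
    by (rule card_mono[OF fin sub])
  finally show ?case .
qed

lemma zero_dist:
  assumes "zero_energy f l M S" "zero_energy f l M T" "S \<noteq> T"
  shows "hamming f l S T \<ge> 2^f"
proof -
  define D where "D = (\<lambda>x. S x - T x)"
  have SA: "S \<in> assignments f l" and TA: "T \<in> assignments f l"
    using assms unfolding zero_energy_def by auto
  obtain x0 where x0: "x0 \<in> vars f l" "S x0 \<noteq> T x0"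
  proof -
    have "\<exists>x\<in>vars f l. S x \<noteq> T x"
    proof (rule ccontr)
      assume "\<not> ?thesis"
      hence "\<forall>x\<in>vars f l. S x = T x" by auto
      hence "S = T" using SA TA unfolding assignments_def by (intro PiE_ext) auto
      thus False using assms by auto
    qed
    thus ?thesis using that by blast
  qed
  have col: "\<forall>x\<in>vars f l. \<forall>b\<in>{0..<f}. sum D {y\<in>vars f l. \<forall>a\<in>{0..<f}-{b}. y a = x a} = 0"
  proof (intro ballI)
    fix x b assume xv: "x \<in> vars f l" and b: "b \<in> {0..<f}"
    let ?C = "(b, restrict x ({0..<f} - {b}))"
    have "?C \<in> columns f l" using xv b unfolding columns_def vars_def by auto
    moreover have "column_vars f l ?C = {y\<in>vars f l. \<forall>a\<in>{0..<f}-{b}. y a = x a}"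
      unfolding column_vars_def by auto
    ultimately have "sum S {y\<in>vars f l. \<forall>a\<in>{0..<f}-{b}. y a = x a} = M ?C"
      "sum T {y\<in>vars f l. \<forall>a\<in>{0..<f}-{b}. y a = x a} = M ?C"
      using assms(1,2) unfolding zero_energy_def by (auto dest!: bspec[of _ _ ?C] simp del: restrict_apply)
    thus "sum D {y\<in>vars f l. \<forall>a\<in>{0..<f}-{b}. y a = x a} = 0"
      unfolding D_def by (simp add: sum_subtractf)
  qed
  have "card {x\<in>Q f l {0..<f} x0. D x \<noteq> 0} \<ge> 2 ^ card {0..<f}"
    by (rule support_bound[OF _ _ col]) (use x0 in \<open>auto simp: Q_def D_def\<close>)
  moreover have "{x\<in>Q f l {0..<f} x0. D x \<noteq> 0} = {i \<in> vars f l. S i \<noteq> T i}"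
    unfolding Q_def D_def by auto
  ultimately show ?thesis unfolding hamming_def by simp
qed

lemma H_nonneg: "H f l M S \<ge> 0"
  unfolding H_def by (intro sum_nonneg) auto

lemma H_zero:
  assumes "S \<in> assignments f l" "H f l M S = 0"
  shows "zero_energy f l M S"
proof -
  have "\<forall>C\<in>columns f l. ((\<Sum>i\<in>column_vars f l C. S i) - M C)^2 = 0"
    using assms(2) finite_columns unfolding H_def
    by (subst sum_nonneg_eq_0_iff[symmetric]) auto
  thus ?thesis using assms(1) unfolding zero_energy_def by auto
qed

lemma H_of_zero: "zero_energy f l M S \<Longrightarrow> H f l M S = 0"
  unfolding zero_energy_def H_def by auto

theorem mainTheorem4:
  fixes f l :: nat and M :: "nat \<times> (nat \<Rightarrow> nat) \<Rightarrow> int"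
  assumes "f \<ge> 1" and "l \<ge> 1"
    and "\<exists>S. zero_energy f l M S"
  shows "(\<forall>S T. zero_energy f l M S \<and> zero_energy f l M T \<and> S \<noteq> T \<longrightarrow> hamming f l S T \<ge> 2^f)
       \<and> (\<forall>S. global_min f l M S \<longrightarrow> k_min f l M (2^f - 1) S)"
proof (intro conjI allI impI)
  fix S T assume "zero_energy f l M S \<and> zero_energy f l M T \<and> S \<noteq> T"
  thus "hamming f l S T \<ge> 2^f" using zero_dist by blast
next
  fix S assume gm: "global_min f l M S"
  obtain S0 where S0: "zero_energy f l M S0" using assms by blast
  have SA: "S \<in> assignments f l" using gm unfolding global_min_def by auto
  have "H f l M S \<le> H f l M S0" using gm S0 unfolding global_min_def zero_energy_def by auto
  hence HS: "H f l M S = 0" using H_of_zero[OF S0] H_nonneg[of f l M S] by simp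
  hence zS: "zero_energy f l M S" using H_zero SA by blast
  show "k_min f l M (2^f - 1) S"
    unfolding k_min_def
  proof (intro conjI ballI impI SA)
    fix T assume TA: "T \<in> assignments f l"
      and h: "1 \<le> hamming f l S T \<and> hamming f l S T \<le> 2 ^ f - 1"
    show "H f l M S < H f l M T"
    proof (rule ccontr)
      assume "\<not> ?thesis"
      hence "H f l M T = 0" using HS H_nonneg[of f l M T] by simp
      hence zT: "zero_energy f l M T" using H_zero TA by blast
      have "S \<noteq> T"
      proof
        assume "S = T"
        hence "hamming f l S T = 0" unfolding hamming_def by simp
        thus False using h by simp
      qed
      hence "hamming f l S T \<ge> 2^f" using zero_dist zS zT by blast
      moreover have "(2::nat)^f \<ge> 1" by simp
      ultimately show False using h by linarith
    qed
  qed
qed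

end
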